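(* For any $n\in\mathbb{N}$, $A>0$ and $\lambda\in[-1,1]$, there exists $f\in C[-1,1]$, nonnegative on $[-1,1]$, such that every algebraic polynomial $P_n$ of degree $\le n$ which is nonnegative on $[-1,1]$ and satisfies $P_n(\lambda)=f(\lambda)$ obeys $$\|f-P_n\|>A\,\omega_3(f,1).$$
   Context: $\|\cdot\|$ is the sup norm on $[-1,1]$; $\omega_3(f,t)$ is the third modulus of smoothness of $f$ on $[-1,1]$. *)

theory Defs
  imports "HOL-Analysis.Analysis" "HOL-Computational_Algebra.Polynomial"
begin

definition sup_norm_I :: "(real \<Rightarrow> real) \<Rightarrow> real" where
  "sup_norm_I g = Sup ((\<lambda>x. \<bar>g x\<bar>) ` {-1..1})"

definition diff3 :: "(real \<Rightarrow> real) \<Rightarrow> real \<Rightarrow> real \<Rightarrow> real" where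
  "diff3 f h x = f (x + 3*h) - 3 * f (x + 2*h) + 3 * f (x + h) - f x"

definition omega3 :: "(real \<Rightarrow> real) \<Rightarrow> real \<Rightarrow> real" where
  "omega3 f t = Sup ((\<lambda>(x, h). \<bar>diff3 f h x\<bar>) `
      {(x, h). 0 < h \<and> h \<le> t \<and> -1 \<le> x \<and> x + 3*h \<le> 1})"

end

theory Submission
  imports Defs
begin

lemma pderiv_sum_aux: "pderiv (\<Sum>x\<in>A. f x) = (\<Sum>x\<in>A. pderiv (f x :: real poly))"
  using higher_pderiv_sum[of 1 f A] by simp

lemma lagrange_deriv_bound:
  fixes S :: "real set" and x0 :: real
  assumes fin: "finite S" and cS: "card S = Suc N"
  shows "\<exists>C\<ge>0. \<forall>g::real poly. degree g \<le> N \<longrightarrow>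
           \<bar>poly (pderiv g) x0\<bar> \<le> C * (\<Sum>x\<in>S. \<bar>poly g x\<bar>)"
proof -
  define L where "L x = smult (1 / (\<Prod>y\<in>S-{x}. (x - y))) (\<Prod>y\<in>S-{x}. [:-y,1:])" for x
  have polyL: "poly (L x) z = (\<Prod>y\<in>S-{x}. (z-y)) / (\<Prod>y\<in>S-{x}. (x-y))" for x z
    by (simp add: L_def poly_prod)
  have L1: "poly (L x) x = 1" if "x \<in> S" for x
  proof -
    have "(\<Prod>y\<in>S-{x}. (x-y)) \<noteq> 0" using fin by (subst prod_zero_iff) auto
    then show ?thesis by (simp add: polyL)
  qed
  have L0: "poly (L x) z = 0" if "z \<in> S" "z \<noteq> x" for x z
  proof -
    have "(\<Prod>y\<in>S-{x}. (z-y)) = 0" using fin that by (subst prod_zero_iff) auto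
    then show ?thesis by (simp add: polyL)
  qed
  have degL: "degree (L x) \<le> N" if "x \<in> S" for x
  proof -
    have "degree (\<Prod>y\<in>S-{x}. [:-y,1::real:]) \<le> card (S - {x})"
      using degree_prod_sum_le[of "S-{x}" "\<lambda>y. [:-y,1::real:]"] fin by (simp add: o_def)
    also have "\<dots> = N" using cS that fin by simp
    finally show ?thesis by (simp add: L_def)
  qed
  define C where "C = (\<Sum>x\<in>S. \<bar>poly (pderiv (L x)) x0\<bar>)"
  have C0: "C \<ge> 0" unfolding C_def by (intro sum_nonneg) auto
  show ?thesis
  proof (intro exI[of _ C] conjI allI impI C0)
    fix g :: "real poly" assume dg: "degree g \<le> N"
    define H where "H = (\<Sum>x\<in>S. smult (poly g x) (L x))"
    have "g = H"
    proof (rule poly_eqI_degree[of S])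
      fix z assume z: "z \<in> S"
      have "poly H z = (\<Sum>x\<in>S. poly g x * poly (L x) z)" by (simp add: H_def poly_sum)
      also have "\<dots> = poly g z * poly (L z) z + (\<Sum>x\<in>S-{z}. poly g x * poly (L x) z)"
        using fin z by (simp add: sum.remove)
      also have "\<dots> = poly g z" using L1[OF z] L0 z by simp
      finally show "poly g z = poly H z" by simp
    next
      show "card S > degree g" using dg cS by simp
    next
      have "degree H \<le> N" unfolding H_def
        by (intro degree_sum_le fin) (use degL degree_smult_le order_trans in blast)
      then show "card S > degree H" using cS by simp
    qed
    then have "poly (pderiv g) x0 = poly (pderiv H) x0" by simp
    also have "\<dots> = (\<Sum>x\<in>S. poly g x * poly (pderiv (L x)) x0)"
      unfolding H_def by (simp add: pderiv_sum_aux pderiv_smult poly_sum)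
    finally have "poly (pderiv g) x0 = (\<Sum>x\<in>S. poly g x * poly (pderiv (L x)) x0)" .
    also have "\<bar>\<dots>\<bar> \<le> (\<Sum>x\<in>S. \<bar>poly g x\<bar> * \<bar>poly (pderiv (L x)) x0\<bar>)"
      by (rule order_trans[OF sum_abs]) (simp add: abs_mult)
    also have "\<dots> \<le> (\<Sum>x\<in>S. \<bar>poly g x\<bar> * C)"
    proof (intro sum_mono mult_left_mono)
      fix x assume "x \<in> S"
      then show "\<bar>poly (pderiv (L x)) x0\<bar> \<le> C" unfolding C_def
        using fin by (intro member_le_sum) auto
    qed auto
    also have "\<dots> = C * (\<Sum>x\<in>S. \<bar>poly g x\<bar>)" by (simp add: sum_distrib_right sum_distrib_left mult.commute)
    finally show "\<bar>poly (pderiv g) x0\<bar> \<le> C * (\<Sum>x\<in>S. \<bar>poly g x\<bar>)" .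
  qed
qed

theorem lemma3p3:
  fixes n :: nat and A lam :: real
  assumes "A > 0" and "lam \<in> {-1..1}"
  shows "\<exists>f :: real \<Rightarrow> real. continuous_on {-1..1} f \<and> (\<forall>x\<in>{-1..1}. f x \<ge> 0) \<and>
    (\<forall>P :: real poly. degree P \<le> n \<longrightarrow> (\<forall>x\<in>{-1..1}. poly P x \<ge> 0) \<longrightarrow>
        poly P lam = f lam \<longrightarrow>
        sup_norm_I (\<lambda>x. f x - poly P x) > A * omega3 f 1)"
proof -
  have lam1: "-1 \<le> lam" "lam \<le> 1" using assms(2) by auto
  define \<sigma> :: real where "\<sigma> = (if lam \<ge> 0 then 1 else -1)"
  have s2: "\<sigma> * \<sigma> = 1" by (simp add: \<sigma>_def)
  have s2': "\<sigma> * (\<sigma> * y) = y" for y using s2 by (simp add: mult.assoc[symmetric])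
  define N where "N = max n 2"
  define S where "S = (\<lambda>i. lam - \<sigma> * real i / real (Suc N)) ` {..N}"
  have injS: "inj_on (\<lambda>i. lam - \<sigma> * real i / real (Suc N)) {..N}"
  proof (rule inj_onI)
    fix i j assume "i \<in> {..N}" "j \<in> {..N}" and e: "lam - \<sigma> * real i / real (Suc N) = lam - \<sigma> * real j / real (Suc N)"
    then have "\<sigma> * real i / real (Suc N) = \<sigma> * real j / real (Suc N)" by linarith
    then have "\<sigma> * real i = \<sigma> * real j" by (simp add: divide_cancel_right del: of_nat_Suc)
    moreover have "\<sigma> \<noteq> 0" by (simp add: \<sigma>_def)
    ultimately show "i = j" by simp
  qed
  have finS: "finite S" unfolding S_def by simp
  have cardS: "card S = Suc N" unfolding S_def using card_image[OF injS] by simp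
  have Sdom: "x \<in> {-1..1}" if "x \<in> S" for x
  proof -
    from that[unfolded S_def] obtain i where i: "i \<in> {..N}" "x = lam - \<sigma> * real i / real (Suc N)" by (rule imageE)
    have "real i \<le> real (Suc N)" using i(1) by simp
    then have "real i / real (Suc N) \<le> 1" "0 \<le> real i / real (Suc N)"
      by (simp_all add: divide_le_eq_1 del: of_nat_Suc)
    moreover have "x = lam - \<sigma> * (real i / real (Suc N))" using i(2) by simp
    ultimately obtain t where t: "0 \<le> t" "t \<le> 1" "x = lam - \<sigma> * t" by blast
    show ?thesis using lam1 t unfolding \<sigma>_def by (cases "lam \<ge> 0") auto
  qed
  obtain C where C0: "C \<ge> 0" and CB: "\<And>g::real poly. degree g \<le> N \<Longrightarrow>
           \<bar>poly (pderiv g) lam\<bar> \<le> C * (\<Sum>x\<in>S. \<bar>poly g x\<bar>)"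
    using lagrange_deriv_bound[OF finS cardS, of lam] by blast
  define K where "K = C * real (Suc N) * (A + 1)"
  have K0: "K \<ge> 0" unfolding K_def using C0 assms(1) by simp
  define b where "b = 1 / (K + 1)"
  have b0: "b > 0" unfolding b_def using K0 by simp
  have Kb: "K * b < 1" unfolding b_def using K0 by (simp add: field_simps)
  define q where "q x = (x - lam)^2 + \<sigma> * b * (x - lam)" for x
  define f where "f x = max 0 (q x)" for x
  have fq: "0 \<le> f x - q x" "f x - q x \<le> b^2/4" for x
  proof -
    have "0 \<le> (x - lam + \<sigma> * b / 2)^2" by simp
    then have "- q x \<le> b^2/4" unfolding q_def
      by (simp add: power2_eq_square algebra_simps s2')
    then show "0 \<le> f x - q x" "f x - q x \<le> b^2/4" unfolding f_def by (auto simp: max_def)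
  qed
  have fcont: "continuous_on UNIV f" unfolding f_def q_def by (intro continuous_intros)
  have d3: "\<bar>diff3 f h x\<bar> \<le> b^2" for h x
  proof -
    have dq: "diff3 q h x = 0" unfolding diff3_def q_def by (simp add: power2_eq_square algebra_simps)
    define \<phi> where "\<phi> y = f y - q y" for y
    have "diff3 f h x = diff3 q h x + (\<phi> (x+3*h) - 3 * \<phi> (x+2*h) + 3 * \<phi> (x+h) - \<phi> x)"
      unfolding diff3_def \<phi>_def by simp
    also have "\<dots> = \<phi> (x+3*h) - 3 * \<phi> (x+2*h) + 3 * \<phi> (x+h) - \<phi> x" using dq by simp
    finally have e: "diff3 f h x = \<phi> (x+3*h) - 3 * \<phi> (x+2*h) + 3 * \<phi> (x+h) - \<phi> x" .
    have p1: "\<And>y. 0 \<le> \<phi> y" and p2: "\<And>y. \<phi> y \<le> b^2/4" unfolding \<phi>_def using fq by auto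
    show ?thesis unfolding e
      using p1[of "x+3*h"] p1[of "x+2*h"] p1[of "x+h"] p1[of x]
        p2[of "x+3*h"] p2[of "x+2*h"] p2[of "x+h"] p2[of x]
      by (simp add: abs_le_iff)
  qed
  have om: "omega3 f 1 \<le> b^2" unfolding omega3_def
  proof (rule cSup_least)
    show "(\<lambda>(x, h). \<bar>diff3 f h x\<bar>) ` {(x, h). 0 < h \<and> h \<le> 1 \<and> - 1 \<le> x \<and> x + 3 * h \<le> 1} \<noteq> {}"
    proof -
      have "(-1::real, 1/3::real) \<in> {(x, h). 0 < h \<and> h \<le> 1 \<and> - 1 \<le> x \<and> x + 3 * h \<le> 1}" by simp
      then show ?thesis by blast
    qed
  qed (use d3 in auto)
  show ?thesis
  proof (intro exI[of _ f] conjI ballI allI impI)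
    show "continuous_on {-1..1} f" using fcont by (rule continuous_on_subset) auto
    show "0 \<le> f x" for x unfolding f_def by simp
  next
    fix P :: "real poly"
    assume dP: "degree P \<le> n" and Pnn: "\<forall>x\<in>{-1..1}. 0 \<le> poly P x" and Pl: "poly P lam = f lam"
    have Pl0: "poly P lam = 0" using Pl by (simp add: f_def q_def)
    show "A * omega3 f 1 < sup_norm_I (\<lambda>x. f x - poly P x)"
    proof (rule ccontr)
      assume "\<not> ?thesis"
      then have sn: "sup_norm_I (\<lambda>x. f x - poly P x) \<le> A * b^2"
        using om assms(1) by (meson mult_left_mono less_le_not_le not_le order_trans)
      have cont2: "continuous_on {-1..1} (\<lambda>x. \<bar>f x - poly P x\<bar>)"
        using continuous_on_subset[OF fcont]
        by (intro continuous_intros) auto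
      have bdd: "bdd_above ((\<lambda>x. \<bar>f x - poly P x\<bar>) ` {-1..1})"
        by (intro bounded_imp_bdd_above compact_imp_bounded compact_continuous_image cont2) auto
      have pt: "\<bar>f x - poly P x\<bar> \<le> A * b^2" if "x \<in> {-1..1}" for x
        using cSup_upper[OF imageI[OF that] bdd] sn unfolding sup_norm_I_def by simp
      define Qp where "Qp = [:-lam,1:]^2 + smult (\<sigma>*b) [:-lam,1:]"
      have pQ: "poly Qp x = q x" for x unfolding Qp_def q_def by (simp add: algebra_simps)
      have dQ: "poly (pderiv Qp) lam = \<sigma> * b" unfolding Qp_def
        by (simp add: pderiv_add pderiv_power pderiv_smult pderiv_pCons)
      have degQ: "degree Qp \<le> 2" unfolding Qp_def
        by (intro order_trans[OF degree_add_le_max]) (auto simp: degree_linear_power intro: order_trans[OF degree_smult_le])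
      define G where "G = P - Qp"
      have degG: "degree G \<le> N" unfolding G_def N_def
        using degree_diff_le[of P "max n 2" Qp] dP degQ by auto
      have Gs: "\<bar>poly G x\<bar> \<le> (A+1) * b^2" if "x \<in> S" for x
      proof -
        have "\<bar>poly G x\<bar> = \<bar>(poly P x - f x) + (f x - q x)\<bar>" unfolding G_def by (simp add: pQ)
        also have "\<dots> \<le> A * b^2 + b^2/4" using pt[OF Sdom[OF that]] fq[of x] by auto
        also have "\<dots> \<le> (A+1) * b^2" by (simp add: algebra_simps)
        finally show ?thesis .
      qed
      have sumG: "(\<Sum>x\<in>S. \<bar>poly G x\<bar>) \<le> real (Suc N) * ((A+1) * b^2)"
        using sum_bounded_above[of S "\<lambda>x. \<bar>poly G x\<bar>" "(A+1) * b^2"] Gs cardS by simp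
      have der: "DERIV (\<lambda>x. poly P x) lam :> poly (pderiv P) lam" by simp
      have sgn: "\<sigma> * poly (pderiv P) lam \<le> 0"
      proof (cases "lam \<ge> 0")
        case True
        show ?thesis
        proof (rule ccontr)
          assume "\<not> ?thesis"
          then have "poly (pderiv P) lam > 0" using True by (simp add: \<sigma>_def)
          from DERIV_pos_inc_left[OF der this] obtain d where d: "d > 0"
            "\<forall>h>0. h < d \<longrightarrow> poly P (lam - h) < poly P lam" by blast
          define h where "h = min (d/2) (1/2)"
          have "poly P (lam - h) < 0" using d Pl0 by (simp add: h_def)
          moreover have "lam - h \<in> {-1..1}" using True lam1 d(1) by (auto simp: h_def)
          ultimately show False using Pnn by force
        qed
      next
        case False
        show ?thesis
        proof (rule ccontr)
          assume "\<not> ?thesis"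
          then have "poly (pderiv P) lam < 0" using False by (simp add: \<sigma>_def)
          from DERIV_neg_dec_right[OF der this] obtain d where d: "d > 0"
            "\<forall>h>0. h < d \<longrightarrow> poly P (lam + h) < poly P lam" by blast
          define h where "h = min (d/2) (1/2)"
          have "poly P (lam + h) < 0" using d Pl0 by (simp add: h_def)
          moreover have "lam + h \<in> {-1..1}" using False lam1 d(1) by (auto simp: h_def)
          ultimately show False using Pnn by force
        qed
      qed
      have "b \<le> \<bar>poly (pderiv G) lam\<bar>"
      proof -
        have e: "poly (pderiv G) lam = poly (pderiv P) lam - \<sigma> * b"
          unfolding G_def by (simp add: pderiv_diff dQ)
        show ?thesis using sgn b0 unfolding e by (cases "lam \<ge> 0") (auto simp: \<sigma>_def)
      qed
      also have "\<dots> \<le> C * (real (Suc N) * ((A+1) * b^2))"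
        using CB[OF degG] sumG C0 by (meson mult_left_mono order_trans)
      also have "\<dots> = (K * b) * b" unfolding K_def by (simp add: power2_eq_square)
      also have "\<dots> < 1 * b" using Kb b0 by (intro mult_strict_right_mono) auto
      finally show False by simp
    qed
  qed
qed

end
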